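(* There exists $n \geq 1$ such that the set of PC prographs of size $n$, ordered by $P \leq Q$ if $Q$ can be obtained from $P$ by a finite (possibly empty) sequence of the four rotations, is a poset that is not a lattice.
   Context: A PC prograph of size $n$ is a finite connected directed acyclic graph embedded in the plane (up to isotopy), drawn so that all edges go upward, whose $2n$ vertices are $n$ coproducts (one incoming edge, two outgoing edges distinguished as left and right) and $n$ products (two incoming edges distinguished as left and right, one outgoing edge); exactly one coproduct has its incoming slot unconnected (global input, at the bottom) and exactly one product has its outgoing slot unconnected (global output, at the top); all other slots are joined by edges. The four rotations are local rewritings of a configuration of two adjacent operators; in each, the boundary edges of the configuration, ordered left to right among inputs and among outputs, are reattached in the same order. Writing $\mu$ for a product, $\Delta$ for a coproduct, and composing configurations from bottom to top as in string diagrams: (1) $(\mathrm{id}\otimes\Delta)\circ\Delta \to (\Delta\otimes\mathrm{id})\circ\Delta$ (a coproduct on the right output of a coproduct becomes a coproduct on the left output of a coproduct); (2) $\mu\circ(\mu\otimes\mathrm{id}) \to \mu\circ(\mathrm{id}\otimes\mu)$; (3) $(\mu\otimes\mathrm{id})\circ(\mathrm{id}\otimes\Delta) \to \Delta\circ\mu$ (a coproduct whose left output enters the right input of a product, with two inputs and two outputs, becomes a product whose output enters a coproduct); (4) $\Delta\circ\mu \to (\mathrm{id}\otimes\mu)\circ(\Delta\otimes\mathrm{id})$ (a product whose output enters a coproduct becomes a coproduct whose right output enters the left input of a product). *)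

theory Defs
  imports "HOL-Algebra.Lattice"
begin

text \<open>PC prographs as planar string diagrams (morphisms 1 -> 1 of the free PRO
generated by a product Mu : 2 -> 1 and a coproduct De : 1 -> 2), modulo planar isotopy.
A diagram is a word of elementary layers, read from bottom to top; a layer (g, i)
applies generator g to the wires i, i+1, ... (wires numbered from 0, left to right),
all other wires passing through.  Planar isotopy of such diagrams is the equivalence
generated by interchanging two consecutive layers acting on disjoint sets of wires.\<close>

datatype gen = Mu | De

fun ins :: "gen \<Rightarrow> nat" where
  "ins Mu = 2" | "ins De = 1"

fun outs :: "gen \<Rightarrow> nat" where
  "outs Mu = 1" | "outs De = 2"

type_synonym layer = "gen \<times> nat"
type_synonym diagram = "layer list"

fun valid :: "diagram \<Rightarrow> nat \<Rightarrow> bool" where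
  "valid [] k = True"
| "valid ((g, i) # w) k = (i + ins g \<le> k \<and> valid w (k - ins g + outs g))"

fun nout :: "diagram \<Rightarrow> nat \<Rightarrow> nat" where
  "nout [] k = k"
| "nout ((g, i) # w) k = nout w (k - ins g + outs g)"

definition count_gen :: "gen \<Rightarrow> diagram \<Rightarrow> nat" where
  "count_gen g w = length (filter (\<lambda>l. fst l = g) w)"

definition prograph_word :: "nat \<Rightarrow> diagram \<Rightarrow> bool" where
  "prograph_word n w \<longleftrightarrow> valid w 1 \<and> nout w 1 = 1
     \<and> count_gen Mu w = n \<and> count_gen De w = n"

inductive interchange :: "diagram \<Rightarrow> diagram \<Rightarrow> bool" where
  "j \<ge> i + outs g1 \<Longrightarrow>
   interchange (u @ [(g1, i), (g2, j)] @ v) (u @ [(g2, j - outs g1 + ins g1), (g1, i)] @ v)"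

definition isotopic :: "diagram \<Rightarrow> diagram \<Rightarrow> bool" where
  "isotopic = (sup interchange (interchange\<inverse>\<inverse>))\<^sup>*\<^sup>*"

inductive rotation_rule :: "diagram \<Rightarrow> diagram \<Rightarrow> bool" where
  rot1: "rotation_rule [(De, k), (De, Suc k)] [(De, k), (De, k)]"
| rot2: "rotation_rule [(Mu, k), (Mu, k)] [(Mu, Suc k), (Mu, k)]"
| rot3: "rotation_rule [(De, Suc k), (Mu, k)] [(Mu, k), (De, k)]"
| rot4: "rotation_rule [(Mu, k), (De, k)] [(De, k), (Mu, Suc k)]"

inductive rotation :: "diagram \<Rightarrow> diagram \<Rightarrow> bool" where
  "rotation_rule l r \<Longrightarrow> rotation (u @ l @ v) (u @ r @ v)"

definition reaches :: "diagram \<Rightarrow> diagram \<Rightarrow> bool" where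
  "reaches = (sup isotopic rotation)\<^sup>*\<^sup>*"

definition iso_class :: "diagram \<Rightarrow> diagram set" where
  "iso_class w = {v. isotopic w v}"

definition pc_prographs :: "nat \<Rightarrow> diagram set set" where
  "pc_prographs n = iso_class ` {w. prograph_word n w}"

definition rot_le :: "diagram set \<Rightarrow> diagram set \<Rightarrow> bool" where
  "rot_le P Q \<longleftrightarrow> (\<exists>p\<in>P. \<exists>q\<in>Q. reaches p q)"

definition rotation_order :: "nat \<Rightarrow> diagram set gorder" where
  "rotation_order n = \<lparr>carrier = pc_prographs n, eq = (=), le = rot_le\<rparr>"

end

theory Submission
  imports Defs
begin


fun f_ifwd :: "layer \<Rightarrow> layer \<Rightarrow> diagram list" where
  "f_ifwd (g1, i) (g2, j) = (if i + outs g1 \<le> j then [[(g2, j - outs g1 + ins g1), (g1, i)]] else [])"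

fun f_ibwd :: "layer \<Rightarrow> layer \<Rightarrow> diagram list" where
  "f_ibwd (g2, j) (g1, i) = (if i + ins g1 \<le> j then [[(g1, i), (g2, j - ins g1 + outs g1)]] else [])"

fun f_rotf :: "layer \<Rightarrow> layer \<Rightarrow> diagram list" where
  "f_rotf (De, k) (De, k') = (if k' = Suc k then [[(De, k), (De, k)]] else [])"
| "f_rotf (Mu, k) (Mu, k') = (if k' = k then [[(Mu, Suc k), (Mu, k)]] else [])"
| "f_rotf (De, k') (Mu, k) = (if k' = Suc k then [[(Mu, k), (De, k)]] else [])"
| "f_rotf (Mu, k) (De, k') = (if k' = k then [[(De, k), (Mu, Suc k)]] else [])"

fun f_rotb :: "layer \<Rightarrow> layer \<Rightarrow> diagram list" where
  "f_rotb (De, k) (De, k') = (if k' = k then [[(De, k), (De, Suc k)]] else [])"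
| "f_rotb (Mu, k) (Mu, k') = (if k = Suc k' then [[(Mu, k'), (Mu, k')]] else [])"
| "f_rotb (Mu, k) (De, k') = (if k' = k then [[(De, Suc k), (Mu, k)]] else [])"
| "f_rotb (De, k) (Mu, k') = (if k' = Suc k then [[(Mu, k), (De, k)]] else [])"

fun adj2 :: "(layer \<Rightarrow> layer \<Rightarrow> diagram list) \<Rightarrow> diagram \<Rightarrow> diagram list" where
  "adj2 f (a # b # v) = map (\<lambda>r. r @ v) (f a b) @ map (Cons a) (adj2 f (b # v))"
| "adj2 f _ = []"

lemma adj2_iff:
  "z \<in> set (adj2 f w) \<longleftrightarrow> (\<exists>u a b v r. w = u @ [a, b] @ v \<and> r \<in> set (f a b) \<and> z = u @ r @ v)"
proof (induction f w arbitrary: z rule: adj2.induct)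
  case (1 f a b v)
  show ?case
  proof
    assume "z \<in> set (adj2 f (a # b # v))"
    then consider (h) r where "r \<in> set (f a b)" "z = r @ v"
      | (t) z' where "z' \<in> set (adj2 f (b # v))" "z = a # z'" by auto
    then show "\<exists>u a' b' v' r. a # b # v = u @ [a', b'] @ v' \<and> r \<in> set (f a' b') \<and> z = u @ r @ v'"
    proof cases
      case h then show ?thesis by (intro exI[of _ "[]"]) auto
    next
      case t
      then obtain u a' b' v' r where "b # v = u @ [a', b'] @ v'" "r \<in> set (f a' b')" "z' = u @ r @ v'"
        using "1.IH" by blast
      then show ?thesis using t by (intro exI[of _ "a # u"]) auto
    qed
  next
    assume "\<exists>u a' b' v' r. a # b # v = u @ [a', b'] @ v' \<and> r \<in> set (f a' b') \<and> z = u @ r @ v'"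
    then obtain u a' b' v' r where e: "a # b # v = u @ [a', b'] @ v'" "r \<in> set (f a' b')" "z = u @ r @ v'"
      by blast
    show "z \<in> set (adj2 f (a # b # v))"
    proof (cases u)
      case Nil then show ?thesis using e by auto
    next
      case (Cons c u')
      then have "b # v = u' @ [a', b'] @ v'" "c = a" using e by auto
      then have "u' @ r @ v' \<in> set (adj2 f (b # v))" using "1.IH" e by blast
      then have "a # (u' @ r @ v') \<in> set (adj2 f (a # b # v))"
        by (subst adj2.simps) (simp only: set_append set_map; blast)
      then show ?thesis using e Cons \<open>c = a\<close> by simp
    qed
  qed
next
  case ("2_1" f)
  then show ?case by auto
next
  case ("2_2" f v)
  then show ?case by (auto simp: Cons_eq_append_conv)
qed

lemma interchange_fwd: "interchange w z \<longleftrightarrow> z \<in> set (adj2 f_ifwd w)"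
proof
  assume "interchange w z"
  then obtain u g1 i g2 j v where h: "j \<ge> i + outs g1" "w = u @ [(g1, i), (g2, j)] @ v"
     "z = u @ [(g2, j - outs g1 + ins g1), (g1, i)] @ v" by cases auto
  show "z \<in> set (adj2 f_ifwd w)" unfolding adj2_iff
    by (intro exI[of _ u] exI[of _ "(g1,i)"] exI[of _ "(g2,j)"] exI[of _ v]
          exI[of _ "[(g2, j - outs g1 + ins g1), (g1, i)]"]) (use h in simp)
next
  assume "z \<in> set (adj2 f_ifwd w)"
  then obtain u a b v r where e: "w = u @ [a, b] @ v" "r \<in> set (f_ifwd a b)" "z = u @ r @ v"
    by (auto simp: adj2_iff)
  obtain g1 i where a: "a = (g1, i)" by force
  obtain g2 j where b: "b = (g2, j)" by force
  have c: "i + outs g1 \<le> j" and r: "r = [(g2, j - outs g1 + ins g1), (g1, i)]"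
    using e a b by (auto split: if_splits)
  have "interchange (u @ [(g1, i), (g2, j)] @ v) (u @ [(g2, j - outs g1 + ins g1), (g1, i)] @ v)"
    by (rule interchange.intros) (use c in simp)
  then show "interchange w z" using e a b r by simp
qed

lemma ins_pos: "ins g \<ge> 1" by (cases g) auto
lemma outs_pos: "outs g \<ge> 1" by (cases g) auto

lemma interchange_bwd: "interchange z w \<longleftrightarrow> z \<in> set (adj2 f_ibwd w)"
proof
  assume "interchange z w"
  then obtain u g1 i g2 j v where h: "j \<ge> i + outs g1" "z = u @ [(g1, i), (g2, j)] @ v"
     "w = u @ [(g2, j - outs g1 + ins g1), (g1, i)] @ v" by cases auto
  have e: "j - outs g1 + ins g1 - ins g1 + outs g1 = j" using h by simp
  show "z \<in> set (adj2 f_ibwd w)" unfolding adj2_iff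
    by (intro exI[of _ u] exI[of _ "(g2, j - outs g1 + ins g1)"] exI[of _ "(g1,i)"] exI[of _ v]
          exI[of _ "[(g1, i), (g2, j)]"]) (use h e in simp)
next
  assume "z \<in> set (adj2 f_ibwd w)"
  then obtain u a b v r where e: "w = u @ [a, b] @ v" "r \<in> set (f_ibwd a b)" "z = u @ r @ v"
    by (auto simp: adj2_iff)
  obtain g2 j where a: "a = (g2, j)" by force
  obtain g1 i where b: "b = (g1, i)" by force
  have c: "i + ins g1 \<le> j" and r: "r = [(g1, i), (g2, j - ins g1 + outs g1)]"
    using e a b by (auto split: if_splits)
  have "interchange (u @ [(g1, i), (g2, j - ins g1 + outs g1)] @ v)
           (u @ [(g2, j - ins g1 + outs g1 - outs g1 + ins g1), (g1, i)] @ v)"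
    by (rule interchange.intros) (use c in simp)
  moreover have "j - ins g1 + outs g1 - outs g1 + ins g1 = j" using c by simp
  ultimately show "interchange z w" using e a b r by simp
qed

lemma rule_fwd: "rotation_rule l r \<Longrightarrow> \<exists>a b. l = [a, b] \<and> r \<in> set (f_rotf a b)"
  by (induct rule: rotation_rule.induct) force+

lemma rule_bwd: "rotation_rule l r \<Longrightarrow> \<exists>a b. r = [a, b] \<and> l \<in> set (f_rotb a b)"
  by (induct rule: rotation_rule.induct) force+

lemma rot_fwd: "rotation w z \<Longrightarrow> z \<in> set (adj2 f_rotf w)"
proof (induct rule: rotation.induct)
  case (1 l r u v)
  then obtain a b where ab: "l = [a, b]" "r \<in> set (f_rotf a b)" using rule_fwd by blast
  show ?case unfolding adj2_iff
    by (intro exI[of _ u] exI[of _ a] exI[of _ b] exI[of _ v] exI[of _ r]) (use ab in simp)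
qed

lemma rot_bwd: "rotation z w \<Longrightarrow> z \<in> set (adj2 f_rotb w)"
proof (induct rule: rotation.induct)
  case (1 l r u v)
  then obtain a b where ab: "r = [a, b]" "l \<in> set (f_rotb a b)" using rule_bwd by blast
  show ?case unfolding adj2_iff
    by (intro exI[of _ u] exI[of _ a] exI[of _ b] exI[of _ v] exI[of _ l]) (use ab in simp)
qed

lemma rot_fwd_sound: "z \<in> set (adj2 f_rotf w) \<Longrightarrow> rotation w z"
proof -
  assume "z \<in> set (adj2 f_rotf w)"
  then obtain u a b v r where e: "w = u @ [a, b] @ v" "r \<in> set (f_rotf a b)" "z = u @ r @ v"
    by (auto simp: adj2_iff)
  obtain g1 k1 where a: "a = (g1, k1)" by force
  obtain g2 k2 where b: "b = (g2, k2)" by force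
  have "rotation_rule [a, b] r"
    using e(2) unfolding a b by (cases g1; cases g2) (auto split: if_splits intro: rotation_rule.intros)
  from rotation.intros[OF this, of u v] show ?thesis using e by simp
qed

definition stp :: "diagram \<Rightarrow> diagram \<Rightarrow> bool" where
  "stp x y \<longleftrightarrow> interchange x y \<or> interchange y x \<or> rotation x y"

lemma reaches_stp: "reaches x y \<Longrightarrow> stp\<^sup>*\<^sup>* x y"
proof -
  have "isotopic \<le> stp\<^sup>*\<^sup>*" unfolding isotopic_def
    by (rule rtranclp_mono) (auto simp: stp_def)
  moreover have "rotation \<le> stp\<^sup>*\<^sup>*" by (auto simp: stp_def)
  ultimately have "sup isotopic rotation \<le> stp\<^sup>*\<^sup>*" by simp
  then have "(sup isotopic rotation)\<^sup>*\<^sup>* \<le> (stp\<^sup>*\<^sup>*)\<^sup>*\<^sup>*" by (rule rtranclp_mono)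
  then show "reaches x y \<Longrightarrow> stp\<^sup>*\<^sup>* x y" unfolding reaches_def by auto
qed

lemma stp_reaches: "stp\<^sup>*\<^sup>* x y \<Longrightarrow> reaches x y"
proof -
  have "stp \<le> sup isotopic rotation" unfolding stp_def isotopic_def by auto
  then have "stp\<^sup>*\<^sup>* \<le> reaches" unfolding reaches_def by (rule rtranclp_mono)
  then show "stp\<^sup>*\<^sup>* x y \<Longrightarrow> reaches x y" by auto
qed

definition nbf :: "diagram \<Rightarrow> diagram list" where
  "nbf w = adj2 f_ifwd w @ adj2 f_ibwd w @ adj2 f_rotf w"

definition nbb :: "diagram \<Rightarrow> diagram list" where
  "nbb w = adj2 f_ifwd w @ adj2 f_ibwd w @ adj2 f_rotb w"

lemma stp_nbf: "stp x y \<Longrightarrow> y \<in> set (nbf x)"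
  unfolding stp_def nbf_def using interchange_fwd interchange_bwd rot_fwd by auto

lemma stp_nbb: "stp x y \<Longrightarrow> x \<in> set (nbb y)"
  unfolding stp_def nbb_def using interchange_fwd interchange_bwd rot_bwd by auto

lemma nbf_stp: "y \<in> set (nbf x) \<Longrightarrow> stp x y"
  unfolding stp_def nbf_def using interchange_fwd interchange_bwd rot_fwd_sound by auto

definition fclosed :: "diagram list \<Rightarrow> bool" where
  "fclosed X \<longleftrightarrow> list_all (\<lambda>w. list_all (\<lambda>z. z \<in> set X) (nbf w)) X"

definition bclosed :: "diagram list \<Rightarrow> bool" where
  "bclosed X \<longleftrightarrow> list_all (\<lambda>w. list_all (\<lambda>z. z \<in> set X) (nbb w)) X"

lemma fclosed_reach: "fclosed X \<Longrightarrow> p \<in> set X \<Longrightarrow> reaches p q \<Longrightarrow> q \<in> set X"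
proof -
  assume c: "fclosed X" and p: "p \<in> set X" and r: "reaches p q"
  from reaches_stp[OF r] show ?thesis
  proof (induct rule: rtranclp_induct)
    case base then show ?case using p .
  next
    case (step y z)
    then show ?case using c stp_nbf[OF step(2)] unfolding fclosed_def list_all_iff by blast
  qed
qed

lemma bclosed_reach: "bclosed X \<Longrightarrow> q \<in> set X \<Longrightarrow> reaches p q \<Longrightarrow> p \<in> set X"
proof -
  assume c: "bclosed X" and q: "q \<in> set X" and r: "reaches p q"
  from reaches_stp[OF r] show ?thesis
  proof (induct rule: converse_rtranclp_induct)
    case base then show ?case using q .
  next
    case (step y z)
    then show ?case using c stp_nbb[OF step(1)] unfolding bclosed_def list_all_iff by blast
  qed
qed

fun chain :: "diagram list \<Rightarrow> bool" where
  "chain (x # y # r) = (y \<in> set (nbf x) \<and> chain (y # r))"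
| "chain _ = True"

lemma chain_reaches: "chain (x # r) \<Longrightarrow> reaches x (last (x # r))"
proof (induct r arbitrary: x)
  case Nil then show ?case by (simp add: reaches_def)
next
  case (Cons y r)
  then have "stp x y" "reaches y (last (y # r))" using nbf_stp by auto
  then show ?case using stp_reaches reaches_stp
    by (metis converse_rtranclp_into_rtranclp last_ConsR list.distinct(1))
qed



definition PHI :: "(diagram \<times> nat) list" where "PHI = [
  ([(De, 0), (De, 0), (De, 0), (Mu, 0), (Mu, 0), (Mu, 0)], 5),
  ([(De, 0), (De, 0), (De, 0), (Mu, 0), (Mu, 1), (Mu, 0)], 17),
  ([(De, 0), (De, 0), (De, 0), (Mu, 1), (Mu, 0), (Mu, 0)], 12),
  ([(De, 0), (De, 0), (De, 0), (Mu, 1), (Mu, 1), (Mu, 0)], 27),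
  ([(De, 0), (De, 0), (De, 0), (Mu, 2), (Mu, 0), (Mu, 0)], 17),
  ([(De, 0), (De, 0), (De, 0), (Mu, 2), (Mu, 1), (Mu, 0)], 42),
  ([(De, 0), (De, 0), (De, 1), (Mu, 0), (Mu, 0), (Mu, 0)], 3),
  ([(De, 0), (De, 0), (De, 1), (Mu, 0), (Mu, 1), (Mu, 0)], 13),
  ([(De, 0), (De, 0), (De, 1), (Mu, 1), (Mu, 0), (Mu, 0)], 6),
  ([(De, 0), (De, 0), (De, 1), (Mu, 1), (Mu, 1), (Mu, 0)], 9),
  ([(De, 0), (De, 0), (De, 1), (Mu, 2), (Mu, 0), (Mu, 0)], 13),
  ([(De, 0), (De, 0), (De, 1), (Mu, 2), (Mu, 1), (Mu, 0)], 27),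
  ([(De, 0), (De, 0), (De, 2), (Mu, 0), (Mu, 0), (Mu, 0)], 2),
  ([(De, 0), (De, 0), (De, 2), (Mu, 0), (Mu, 1), (Mu, 0)], 4),
  ([(De, 0), (De, 0), (De, 2), (Mu, 1), (Mu, 0), (Mu, 0)], 6),
  ([(De, 0), (De, 0), (De, 2), (Mu, 1), (Mu, 1), (Mu, 0)], 13),
  ([(De, 0), (De, 0), (De, 2), (Mu, 2), (Mu, 0), (Mu, 0)], 4),
  ([(De, 0), (De, 0), (De, 2), (Mu, 2), (Mu, 1), (Mu, 0)], 17),
  ([(De, 0), (De, 0), (Mu, 0), (De, 0), (Mu, 0), (Mu, 0)], 5),
  ([(De, 0), (De, 0), (Mu, 0), (De, 0), (Mu, 1), (Mu, 0)], 18),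
  ([(De, 0), (De, 0), (Mu, 0), (De, 1), (Mu, 0), (Mu, 0)], 2),
  ([(De, 0), (De, 0), (Mu, 0), (De, 1), (Mu, 1), (Mu, 0)], 4),
  ([(De, 0), (De, 0), (Mu, 0), (Mu, 0), (De, 0), (Mu, 0)], 4),
  ([(De, 0), (De, 0), (Mu, 1), (De, 0), (Mu, 0), (Mu, 0)], 17),
  ([(De, 0), (De, 0), (Mu, 1), (De, 0), (Mu, 1), (Mu, 0)], 42),
  ([(De, 0), (De, 0), (Mu, 1), (De, 1), (Mu, 0), (Mu, 0)], 9),
  ([(De, 0), (De, 0), (Mu, 1), (De, 1), (Mu, 1), (Mu, 0)], 18),
  ([(De, 0), (De, 0), (Mu, 1), (Mu, 0), (De, 0), (Mu, 0)], 14),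
  ([(De, 0), (De, 1), (De, 0), (Mu, 0), (Mu, 0), (Mu, 0)], 2),
  ([(De, 0), (De, 1), (De, 0), (Mu, 0), (Mu, 1), (Mu, 0)], 4),
  ([(De, 0), (De, 1), (De, 0), (Mu, 1), (Mu, 0), (Mu, 0)], 6),
  ([(De, 0), (De, 1), (De, 0), (Mu, 1), (Mu, 1), (Mu, 0)], 13),
  ([(De, 0), (De, 1), (De, 0), (Mu, 2), (Mu, 0), (Mu, 0)], 4),
  ([(De, 0), (De, 1), (De, 0), (Mu, 2), (Mu, 1), (Mu, 0)], 17),
  ([(De, 0), (De, 1), (De, 1), (Mu, 0), (Mu, 0), (Mu, 0)], 2),
  ([(De, 0), (De, 1), (De, 1), (Mu, 0), (Mu, 1), (Mu, 0)], 6),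
  ([(De, 0), (De, 1), (De, 1), (Mu, 1), (Mu, 0), (Mu, 0)], 4),
  ([(De, 0), (De, 1), (De, 1), (Mu, 1), (Mu, 1), (Mu, 0)], 6),
  ([(De, 0), (De, 1), (De, 1), (Mu, 2), (Mu, 0), (Mu, 0)], 6),
  ([(De, 0), (De, 1), (De, 1), (Mu, 2), (Mu, 1), (Mu, 0)], 12),
  ([(De, 0), (De, 1), (De, 2), (Mu, 0), (Mu, 0), (Mu, 0)], 1),
  ([(De, 0), (De, 1), (De, 2), (Mu, 0), (Mu, 1), (Mu, 0)], 2),
  ([(De, 0), (De, 1), (De, 2), (Mu, 1), (Mu, 0), (Mu, 0)], 2),
  ([(De, 0), (De, 1), (De, 2), (Mu, 1), (Mu, 1), (Mu, 0)], 3),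
  ([(De, 0), (De, 1), (De, 2), (Mu, 2), (Mu, 0), (Mu, 0)], 2),
  ([(De, 0), (De, 1), (De, 2), (Mu, 2), (Mu, 1), (Mu, 0)], 5),
  ([(De, 0), (De, 1), (Mu, 0), (De, 0), (Mu, 0), (Mu, 0)], 3),
  ([(De, 0), (De, 1), (Mu, 0), (De, 0), (Mu, 1), (Mu, 0)], 9),
  ([(De, 0), (De, 1), (Mu, 0), (De, 1), (Mu, 0), (Mu, 0)], 1),
  ([(De, 0), (De, 1), (Mu, 0), (De, 1), (Mu, 1), (Mu, 0)], 2),
  ([(De, 0), (De, 1), (Mu, 0), (Mu, 0), (De, 0), (Mu, 0)], 2),
  ([(De, 0), (De, 1), (Mu, 1), (De, 0), (Mu, 0), (Mu, 0)], 4),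
  ([(De, 0), (De, 1), (Mu, 1), (De, 0), (Mu, 1), (Mu, 0)], 17),
  ([(De, 0), (De, 1), (Mu, 1), (De, 1), (Mu, 0), (Mu, 0)], 3),
  ([(De, 0), (De, 1), (Mu, 1), (De, 1), (Mu, 1), (Mu, 0)], 5),
  ([(De, 0), (De, 1), (Mu, 1), (Mu, 0), (De, 0), (Mu, 0)], 5),
  ([(De, 0), (Mu, 0), (De, 0), (De, 0), (Mu, 0), (Mu, 0)], 5),
  ([(De, 0), (Mu, 0), (De, 0), (De, 0), (Mu, 1), (Mu, 0)], 14),
  ([(De, 0), (Mu, 0), (De, 0), (De, 1), (Mu, 0), (Mu, 0)], 2),
  ([(De, 0), (Mu, 0), (De, 0), (De, 1), (Mu, 1), (Mu, 0)], 4),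
  ([(De, 0), (Mu, 0), (De, 0), (Mu, 0), (De, 0), (Mu, 0)], 4)]"

definition Xa :: "diagram list" where "Xa = [
  [(De, 0), (De, 0), (De, 0), (Mu, 1), (Mu, 1), (Mu, 0)],
  [(De, 0), (De, 0), (De, 0), (Mu, 2), (Mu, 1), (Mu, 0)],
  [(De, 0), (De, 0), (Mu, 0), (De, 0), (Mu, 1), (Mu, 0)],
  [(De, 0), (De, 0), (Mu, 0), (Mu, 0), (De, 0), (Mu, 0)],
  [(De, 0), (De, 0), (Mu, 1), (De, 0), (Mu, 1), (Mu, 0)],
  [(De, 0), (De, 0), (Mu, 1), (Mu, 0), (De, 0), (Mu, 0)]]"

definition Xb :: "diagram list" where "Xb = [
  [(De, 0), (De, 0), (De, 0), (Mu, 0), (Mu, 1), (Mu, 0)],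
  [(De, 0), (De, 0), (De, 0), (Mu, 1), (Mu, 1), (Mu, 0)],
  [(De, 0), (De, 0), (De, 0), (Mu, 2), (Mu, 0), (Mu, 0)],
  [(De, 0), (De, 0), (De, 0), (Mu, 2), (Mu, 1), (Mu, 0)],
  [(De, 0), (De, 0), (De, 1), (Mu, 0), (Mu, 1), (Mu, 0)],
  [(De, 0), (De, 0), (De, 1), (Mu, 2), (Mu, 0), (Mu, 0)],
  [(De, 0), (De, 0), (De, 1), (Mu, 2), (Mu, 1), (Mu, 0)],
  [(De, 0), (De, 0), (Mu, 0), (De, 0), (Mu, 1), (Mu, 0)],
  [(De, 0), (De, 0), (Mu, 1), (De, 0), (Mu, 0), (Mu, 0)],
  [(De, 0), (De, 0), (Mu, 1), (De, 0), (Mu, 1), (Mu, 0)],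
  [(De, 0), (De, 0), (Mu, 1), (De, 1), (Mu, 0), (Mu, 0)],
  [(De, 0), (De, 0), (Mu, 1), (De, 1), (Mu, 1), (Mu, 0)],
  [(De, 0), (De, 0), (Mu, 1), (Mu, 0), (De, 0), (Mu, 0)]]"

definition Y1 :: "diagram list" where "Y1 = [
  [(De, 0), (De, 0), (De, 1), (Mu, 0), (Mu, 0), (Mu, 0)],
  [(De, 0), (De, 0), (De, 1), (Mu, 0), (Mu, 1), (Mu, 0)],
  [(De, 0), (De, 0), (De, 1), (Mu, 2), (Mu, 0), (Mu, 0)],
  [(De, 0), (De, 0), (De, 2), (Mu, 0), (Mu, 0), (Mu, 0)],
  [(De, 0), (De, 0), (De, 2), (Mu, 1), (Mu, 0), (Mu, 0)],
  [(De, 0), (De, 0), (Mu, 0), (De, 0), (Mu, 0), (Mu, 0)],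
  [(De, 0), (De, 0), (Mu, 0), (De, 0), (Mu, 1), (Mu, 0)],
  [(De, 0), (De, 0), (Mu, 0), (De, 1), (Mu, 0), (Mu, 0)],
  [(De, 0), (De, 0), (Mu, 0), (Mu, 0), (De, 0), (Mu, 0)],
  [(De, 0), (De, 0), (Mu, 1), (De, 1), (Mu, 0), (Mu, 0)],
  [(De, 0), (De, 1), (De, 0), (Mu, 0), (Mu, 0), (Mu, 0)],
  [(De, 0), (De, 1), (De, 0), (Mu, 1), (Mu, 0), (Mu, 0)],
  [(De, 0), (De, 1), (De, 1), (Mu, 0), (Mu, 0), (Mu, 0)],
  [(De, 0), (De, 1), (De, 1), (Mu, 0), (Mu, 1), (Mu, 0)],
  [(De, 0), (De, 1), (De, 1), (Mu, 2), (Mu, 0), (Mu, 0)],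
  [(De, 0), (De, 1), (De, 2), (Mu, 0), (Mu, 0), (Mu, 0)],
  [(De, 0), (De, 1), (De, 2), (Mu, 0), (Mu, 1), (Mu, 0)],
  [(De, 0), (De, 1), (De, 2), (Mu, 1), (Mu, 0), (Mu, 0)],
  [(De, 0), (De, 1), (De, 2), (Mu, 2), (Mu, 0), (Mu, 0)],
  [(De, 0), (De, 1), (Mu, 0), (De, 0), (Mu, 0), (Mu, 0)],
  [(De, 0), (De, 1), (Mu, 0), (De, 0), (Mu, 1), (Mu, 0)],
  [(De, 0), (De, 1), (Mu, 0), (De, 1), (Mu, 0), (Mu, 0)],
  [(De, 0), (De, 1), (Mu, 0), (De, 1), (Mu, 1), (Mu, 0)],
  [(De, 0), (De, 1), (Mu, 0), (Mu, 0), (De, 0), (Mu, 0)],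
  [(De, 0), (De, 1), (Mu, 1), (De, 1), (Mu, 0), (Mu, 0)],
  [(De, 0), (Mu, 0), (De, 0), (De, 1), (Mu, 0), (Mu, 0)]]"

definition Y2 :: "diagram list" where "Y2 = [
  [(De, 0), (De, 0), (De, 2), (Mu, 0), (Mu, 0), (Mu, 0)],
  [(De, 0), (De, 0), (De, 2), (Mu, 1), (Mu, 0), (Mu, 0)],
  [(De, 0), (De, 0), (Mu, 0), (De, 1), (Mu, 0), (Mu, 0)],
  [(De, 0), (De, 0), (Mu, 0), (Mu, 0), (De, 0), (Mu, 0)],
  [(De, 0), (De, 0), (Mu, 1), (De, 1), (Mu, 0), (Mu, 0)],
  [(De, 0), (De, 0), (Mu, 1), (Mu, 0), (De, 0), (Mu, 0)],
  [(De, 0), (De, 1), (De, 0), (Mu, 0), (Mu, 0), (Mu, 0)],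
  [(De, 0), (De, 1), (De, 0), (Mu, 1), (Mu, 0), (Mu, 0)],
  [(De, 0), (De, 1), (De, 1), (Mu, 0), (Mu, 0), (Mu, 0)],
  [(De, 0), (De, 1), (De, 2), (Mu, 0), (Mu, 0), (Mu, 0)],
  [(De, 0), (De, 1), (De, 2), (Mu, 1), (Mu, 0), (Mu, 0)],
  [(De, 0), (De, 1), (Mu, 0), (De, 0), (Mu, 0), (Mu, 0)],
  [(De, 0), (De, 1), (Mu, 0), (De, 1), (Mu, 0), (Mu, 0)],
  [(De, 0), (De, 1), (Mu, 0), (Mu, 0), (De, 0), (Mu, 0)],
  [(De, 0), (De, 1), (Mu, 1), (De, 1), (Mu, 0), (Mu, 0)],
  [(De, 0), (De, 1), (Mu, 1), (Mu, 0), (De, 0), (Mu, 0)],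
  [(De, 0), (Mu, 0), (De, 0), (De, 1), (Mu, 0), (Mu, 0)],
  [(De, 0), (Mu, 0), (De, 0), (Mu, 0), (De, 0), (Mu, 0)]]"

definition wa :: diagram where "wa = [(De, 0), (De, 0), (Mu, 0), (Mu, 0), (De, 0), (Mu, 0)]"

definition wb :: diagram where "wb = [(De, 0), (De, 0), (Mu, 1), (De, 1), (Mu, 0), (Mu, 0)]"

definition wu1 :: diagram where "wu1 = [(De, 0), (De, 0), (Mu, 0), (De, 0), (Mu, 1), (Mu, 0)]"

definition wu2 :: diagram where "wu2 = [(De, 0), (De, 0), (Mu, 1), (Mu, 0), (De, 0), (Mu, 0)]"

definition pa1 :: "diagram list" where "pa1 = [
  [(De, 0), (De, 0), (Mu, 0), (Mu, 0), (De, 0), (Mu, 0)],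
  [(De, 0), (De, 0), (Mu, 0), (De, 0), (Mu, 1), (Mu, 0)]]"

definition pa2 :: "diagram list" where "pa2 = [
  [(De, 0), (De, 0), (Mu, 0), (Mu, 0), (De, 0), (Mu, 0)],
  [(De, 0), (De, 0), (Mu, 1), (Mu, 0), (De, 0), (Mu, 0)]]"

definition pb1 :: "diagram list" where "pb1 = [
  [(De, 0), (De, 0), (Mu, 1), (De, 1), (Mu, 0), (Mu, 0)],
  [(De, 0), (De, 0), (De, 1), (Mu, 2), (Mu, 0), (Mu, 0)],
  [(De, 0), (De, 0), (De, 1), (Mu, 0), (Mu, 1), (Mu, 0)],
  [(De, 0), (De, 0), (Mu, 0), (De, 0), (Mu, 1), (Mu, 0)]]"

definition pb2 :: "diagram list" where "pb2 = [
  [(De, 0), (De, 0), (Mu, 1), (De, 1), (Mu, 0), (Mu, 0)],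
  [(De, 0), (De, 0), (Mu, 1), (Mu, 0), (De, 0), (Mu, 0)]]"


fun en :: "nat \<Rightarrow> nat \<Rightarrow> nat \<Rightarrow> diagram list" where
  "en 0 m k = (if m = 0 then [[]] else [])"
| "en (Suc n) m k = concat (map (\<lambda>i. map (Cons (De, i)) (en n m (Suc k))) [0..<k])
     @ (if m > 0 then concat (map (\<lambda>i. map (Cons (Mu, i)) (en n (m - 1) (k - 1))) [0..<k - 1]) else [])"

lemma count_Cons: "count_gen g ((h, i) # w) = (if h = g then Suc (count_gen g w) else count_gen g w)"
  by (simp add: count_gen_def)

lemma count_sum: "count_gen Mu w + count_gen De w = length w"
proof (induct w)
  case Nil then show ?case by (simp add: count_gen_def)
next
  case (Cons a w)
  obtain h i where "a = (h, i)" by force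
  then show ?case using Cons by (cases h) (auto simp: count_Cons)
qed

lemma en_complete: "valid w k \<Longrightarrow> w \<in> set (en (length w) (count_gen Mu w) k)"
proof (induct w arbitrary: k)
  case Nil then show ?case by (simp add: count_gen_def)
next
  case (Cons a w)
  obtain h i where a: "a = (h, i)" by force
  show ?case
  proof (cases h)
    case Mu
    with Cons.prems a have v0: "i + 2 \<le> k" "valid w (k - ins Mu + outs Mu)" by auto
    have "k - ins Mu + outs Mu = k - 1" using v0 by simp
    then have v: "i + 2 \<le> k" "valid w (k - 1)" using v0 by auto
    then have "w \<in> set (en (length w) (count_gen Mu w) (k - 1))" using Cons by blast
    then show ?thesis using a Mu v by (auto simp: count_Cons)
  next
    case De
    with Cons a have v: "i + 1 \<le> k" "valid w (Suc k)" by auto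
    then have "w \<in> set (en (length w) (count_gen Mu w) (Suc k))" using Cons by blast
    then show ?thesis using a De v by (auto simp: count_Cons)
  qed
qed

definition Wgen :: "diagram list" where "Wgen = filter (\<lambda>w. nout w 1 = 1) (en 6 3 1)"

lemma prograph_in_Wgen: "prograph_word 3 w \<Longrightarrow> w \<in> set Wgen"
proof -
  assume p: "prograph_word 3 w"
  then have "length w = 6" using count_sum[of w] by (simp add: prograph_word_def)
  then show ?thesis using p en_complete[of w 1] by (simp add: prograph_word_def Wgen_def)
qed

lemma Wgen_PHI: "list_all (\<lambda>w. map_of PHI w \<noteq> None) Wgen"
  unfolding Wgen_def PHI_def by code_simp

definition phi :: "diagram \<Rightarrow> nat" where "phi w = the (map_of PHI w)"

definition phi_ok :: bool where
  "phi_ok \<longleftrightarrow> list_all (\<lambda>w. list_all (\<lambda>z. map_of PHI z = map_of PHI w) (adj2 f_ifwd w @ adj2 f_ibwd w)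
     \<and> list_all (\<lambda>z. case map_of PHI z of None \<Rightarrow> False | Some k \<Rightarrow> the (map_of PHI w) < k) (adj2 f_rotf w))
     (map fst PHI)"

lemma phi_ok: phi_ok
  unfolding phi_ok_def PHI_def by code_simp



lemma cl_Xa: "fclosed Xa" unfolding fclosed_def nbf_def Xa_def by code_simp
lemma cl_Xb: "fclosed Xb" unfolding fclosed_def nbf_def Xb_def by code_simp
lemma cl_Y1: "bclosed Y1" unfolding bclosed_def nbb_def Y1_def by code_simp
lemma cl_Y2: "bclosed Y2" unfolding bclosed_def nbb_def Y2_def by code_simp
lemma disj: "list_all (\<lambda>w. \<not> (w \<in> set Xb \<and> w \<in> set Y1 \<and> w \<in> set Y2)) Xa"
  unfolding Xa_def Xb_def Y1_def Y2_def by code_simp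
lemma mem: "wa \<in> set Xa" "wb \<in> set Xb" "wu1 \<in> set Y1" "wu2 \<in> set Y2"
  unfolding Xa_def Xb_def Y1_def Y2_def wa_def wb_def wu1_def wu2_def by simp_all
lemma chains: "chain pa1" "chain pa2" "chain pb1" "chain pb2"
  unfolding pa1_def pa2_def pb1_def pb2_def nbf_def by code_simp+
lemma ends: "pa1 = wa # tl pa1" "last pa1 = wu1" "pa2 = wa # tl pa2" "last pa2 = wu2"
   "pb1 = wb # tl pb1" "last pb1 = wu1" "pb2 = wb # tl pb2" "last pb2 = wu2"
  unfolding pa1_def pa2_def pb1_def pb2_def wa_def wb_def wu1_def wu2_def by simp_all
lemma pw: "prograph_word 3 wa" "prograph_word 3 wb" "prograph_word 3 wu1" "prograph_word 3 wu2"
  unfolding prograph_word_def wa_def wb_def wu1_def wu2_def count_gen_def by simp_all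



lemma isotopic_refl: "isotopic x x" unfolding isotopic_def by simp

lemma isotopic_trans: "isotopic x y \<Longrightarrow> isotopic y z \<Longrightarrow> isotopic x z"
  unfolding isotopic_def by (rule rtranclp_trans)

lemma isotopic_sym: "isotopic x y \<Longrightarrow> isotopic y x"
proof -
  have "symp (sup interchange (interchange\<inverse>\<inverse>))" by (auto intro: sympI)
  then have "symp isotopic" unfolding isotopic_def by (rule symp_rtranclp)
  then show "isotopic x y \<Longrightarrow> isotopic y x" by (auto dest: sympD)
qed

lemma iso_reaches: "isotopic x y \<Longrightarrow> reaches x y"
proof -
  have "isotopic \<le> reaches" unfolding reaches_def by auto
  then show "isotopic x y \<Longrightarrow> reaches x y" by auto
qed

lemma reaches_trans: "reaches x y \<Longrightarrow> reaches y z \<Longrightarrow> reaches x z"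
  unfolding reaches_def by (rule rtranclp_trans)

lemma iso_class_eq: "isotopic x y \<Longrightarrow> iso_class x = iso_class y"
  unfolding iso_class_def using isotopic_trans isotopic_sym by blast

lemma rot_le_iff: "rot_le (iso_class x) (iso_class y) \<longleftrightarrow> reaches x y"
proof
  assume "rot_le (iso_class x) (iso_class y)"
  then obtain p q where "isotopic x p" "isotopic y q" "reaches p q"
    unfolding rot_le_def iso_class_def by auto
  then show "reaches x y" using iso_reaches isotopic_sym reaches_trans by meson
next
  assume "reaches x y"
  then show "rot_le (iso_class x) (iso_class y)"
    unfolding rot_le_def iso_class_def using isotopic_refl by blast
qed

lemma D_phi: "map_of PHI w \<noteq> None \<Longrightarrow> map_of PHI w = Some (phi w)"
  unfolding phi_def by auto

lemma phi_step:
  assumes d: "map_of PHI y \<noteq> None" and s: "stp y z"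
  shows "map_of PHI z \<noteq> None \<and> ((isotopic y z \<and> phi z = phi y) \<or> phi y < phi z)"
proof -
  have y: "y \<in> set (map fst PHI)" using d by (auto simp: map_of_eq_None_iff)
  have ok: "list_all (\<lambda>z. map_of PHI z = map_of PHI y) (adj2 f_ifwd y @ adj2 f_ibwd y)
     \<and> list_all (\<lambda>z. case map_of PHI z of None \<Rightarrow> False | Some k \<Rightarrow> the (map_of PHI y) < k) (adj2 f_rotf y)"
    using phi_ok y unfolding phi_ok_def list_all_iff by blast
  from s consider "interchange y z" | "interchange z y" | "rotation y z" unfolding stp_def by blast
  then show ?thesis
  proof cases
    case 1
    then have "z \<in> set (adj2 f_ifwd y)" using interchange_fwd by blast
    then have "map_of PHI z = map_of PHI y" using ok by (auto simp: list_all_iff)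
    moreover have "isotopic y z" using 1 unfolding isotopic_def by auto
    ultimately show ?thesis using d by (simp add: phi_def)
  next
    case 2
    then have "z \<in> set (adj2 f_ibwd y)" using interchange_bwd by blast
    then have "map_of PHI z = map_of PHI y" using ok by (auto simp: list_all_iff)
    moreover have "isotopic y z" using 2 unfolding isotopic_def by auto
    ultimately show ?thesis using d by (simp add: phi_def)
  next
    case 3
    then have "z \<in> set (adj2 f_rotf y)" using rot_fwd by blast
    then have "case map_of PHI z of None \<Rightarrow> False | Some k \<Rightarrow> the (map_of PHI y) < k"
      using ok by (auto simp: list_all_iff)
    then show ?thesis by (auto simp: phi_def split: option.splits)
  qed
qed

lemma phi_reach:
  assumes r: "reaches p q" and d: "map_of PHI p \<noteq> None"
  shows "map_of PHI q \<noteq> None \<and> phi p \<le> phi q \<and> (phi p = phi q \<longrightarrow> isotopic p q)"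
  using reaches_stp[OF r]
proof (induct rule: rtranclp_induct)
  case base then show ?case using d isotopic_refl by simp
next
  case (step y z)
  then have hy: "map_of PHI y \<noteq> None" "phi p \<le> phi y" "phi p = phi y \<longrightarrow> isotopic p y" by auto
  from phi_step[OF hy(1) step(2)] have z: "map_of PHI z \<noteq> None"
    and c: "(isotopic y z \<and> phi z = phi y) \<or> phi y < phi z" by blast+
  show ?case
  proof (cases "phi y < phi z")
    case True then show ?thesis using z hy(2) by simp
  next
    case False
    then have "isotopic y z" "phi z = phi y" using c by blast+
    moreover have "phi p = phi y \<longrightarrow> isotopic p z"
      using hy(3) isotopic_trans[OF _ \<open>isotopic y z\<close>] by blast
    ultimately show ?thesis using z hy(2) by simp
  qed
qed

lemma chain_reaches': "chain p \<Longrightarrow> p = x # tl p \<Longrightarrow> last p = y \<Longrightarrow> reaches x y"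
  using chain_reaches[of x "tl p"] by simp

lemma carrier3: "carrier (rotation_order 3) = iso_class ` {w. prograph_word 3 w}"
  by (simp add: rotation_order_def pc_prographs_def)

lemma le3: "le (rotation_order 3) = rot_le"
  by (simp add: rotation_order_def)

lemma D_of_pw: "prograph_word 3 w \<Longrightarrow> map_of PHI w \<noteq> None"
  using prograph_in_Wgen Wgen_PHI by (auto simp: list_all_iff)

lemma eq3: "eq (rotation_order 3) = (=)" by (simp add: rotation_order_def)

lemma po_antisym:
  assumes "x \<sqsubseteq>\<^bsub>rotation_order 3\<^esub> y" "y \<sqsubseteq>\<^bsub>rotation_order 3\<^esub> x"
    "x \<in> carrier (rotation_order 3)" "y \<in> carrier (rotation_order 3)"
  shows "x = y"
proof -
  obtain a where a: "prograph_word 3 a" "x = iso_class a" using assms(3) unfolding carrier3 by blast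
  obtain b where b: "prograph_word 3 b" "y = iso_class b" using assms(4) unfolding carrier3 by blast
  have r: "reaches a b" "reaches b a" using assms(1,2) a b by (simp_all only: le3 rot_le_iff)
  have "phi a \<le> phi b" "phi b \<le> phi a" "phi a = phi b \<longrightarrow> isotopic a b"
    using phi_reach[OF r(1) D_of_pw[OF a(1)]] phi_reach[OF r(2) D_of_pw[OF b(1)]] by auto
  then have "isotopic a b" by simp
  then show "x = y" using a b iso_class_eq by simp
qed

lemma reaches_refl: "reaches x x" by (simp add: reaches_def)

lemma po_refl: "x \<in> carrier (rotation_order 3) \<Longrightarrow> x \<sqsubseteq>\<^bsub>rotation_order 3\<^esub> x"
proof -
  assume "x \<in> carrier (rotation_order 3)"
  then obtain p where p: "x = iso_class p" unfolding carrier3 by blast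
  show ?thesis using p reaches_refl by (simp only: le3 rot_le_iff)
qed

lemma po_trans: "x \<sqsubseteq>\<^bsub>rotation_order 3\<^esub> y \<Longrightarrow> y \<sqsubseteq>\<^bsub>rotation_order 3\<^esub> z \<Longrightarrow>
   x \<in> carrier (rotation_order 3) \<Longrightarrow> y \<in> carrier (rotation_order 3) \<Longrightarrow> z \<in> carrier (rotation_order 3)
   \<Longrightarrow> x \<sqsubseteq>\<^bsub>rotation_order 3\<^esub> z"
proof -
  assume a: "x \<sqsubseteq>\<^bsub>rotation_order 3\<^esub> y" "y \<sqsubseteq>\<^bsub>rotation_order 3\<^esub> z"
    "x \<in> carrier (rotation_order 3)" "y \<in> carrier (rotation_order 3)" "z \<in> carrier (rotation_order 3)"
  obtain p where p: "x = iso_class p" using a(3) unfolding carrier3 by blast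
  obtain q where q: "y = iso_class q" using a(4) unfolding carrier3 by blast
  obtain r where r: "z = iso_class r" using a(5) unfolding carrier3 by blast
  have "reaches p q" "reaches q r" using a(1,2) p q r by (simp_all only: le3 rot_le_iff)
  then have "reaches p r" by (rule reaches_trans)
  then show ?thesis using p r by (simp only: le3 rot_le_iff)
qed

lemma po3: "partial_order (rotation_order 3)"
  apply (intro partial_order.intro weak_partial_order.intro equivalence.intro weak_partial_order_axioms.intro
      partial_order_axioms.intro)
         apply (unfold eq3)
         apply (rule refl)
        apply (erule sym)
       apply (erule (1) trans)
      apply (erule po_refl)
     apply (erule (3) po_antisym)
    apply (erule (4) po_trans)
   apply simp
  apply (rule refl)
  done

lemma upper2I: "u \<in> carrier L \<Longrightarrow> a \<sqsubseteq>\<^bsub>L\<^esub> u \<Longrightarrow> b \<sqsubseteq>\<^bsub>L\<^esub> u \<Longrightarrow> u \<in> Upper L {a, b}"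
  unfolding Upper_def by auto

lemma upper2D: "u \<in> Upper L {a, b} \<Longrightarrow> a \<in> carrier L \<Longrightarrow> b \<in> carrier L \<Longrightarrow>
    a \<sqsubseteq>\<^bsub>L\<^esub> u \<and> b \<sqsubseteq>\<^bsub>L\<^esub> u \<and> u \<in> carrier L"
  unfolding Upper_def by auto

lemma not_lattice3: "\<not> lattice (rotation_order 3)"
proof
  assume "lattice (rotation_order 3)"
  then have us: "upper_semilattice (rotation_order 3)" by (simp add: lattice_def)
  let ?L = "rotation_order 3"
  have cA: "iso_class wa \<in> carrier ?L" and cB: "iso_class wb \<in> carrier ?L"
    and c1: "iso_class wu1 \<in> carrier ?L" and c2: "iso_class wu2 \<in> carrier ?L"
    unfolding carrier3 using pw by blast+
  have r: "reaches wa wu1" "reaches wa wu2" "reaches wb wu1" "reaches wb wu2"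
    using chain_reaches'[OF chains(1) ends(1,2)] chain_reaches'[OF chains(2) ends(3,4)]
      chain_reaches'[OF chains(3) ends(5,6)] chain_reaches'[OF chains(4) ends(7,8)] by auto
  obtain S where S: "least ?L S (Upper ?L {iso_class wa, iso_class wb})"
    using upper_semilattice.sup_of_two_exists[OF us cA cB] by blast
  then have SU: "S \<in> Upper ?L {iso_class wa, iso_class wb}" unfolding least_def by blast
  then have "S \<in> carrier ?L" using upper2D[OF SU cA cB] by blast
  then obtain s where s: "prograph_word 3 s" "S = iso_class s"
    unfolding carrier3 by blast
  have "iso_class wa \<sqsubseteq>\<^bsub>?L\<^esub> S" "iso_class wb \<sqsubseteq>\<^bsub>?L\<^esub> S"
    using upper2D[OF SU cA cB] by blast+
  then have "reaches wa s" "reaches wb s" using s(2) by (simp_all only: le3 rot_le_iff)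
  then have sX: "s \<in> set Xa" "s \<in> set Xb"
    using fclosed_reach[OF cl_Xa mem(1)] fclosed_reach[OF cl_Xb mem(2)] by auto
  have u1: "iso_class wu1 \<in> Upper ?L {iso_class wa, iso_class wb}"
    by (rule upper2I; simp only: c1 c2 le3 rot_le_iff r)
  have u2: "iso_class wu2 \<in> Upper ?L {iso_class wa, iso_class wb}"
    by (rule upper2I; simp only: c1 c2 le3 rot_le_iff r)
  have all: "\<forall>x\<in>Upper ?L {iso_class wa, iso_class wb}. S \<sqsubseteq>\<^bsub>?L\<^esub> x"
    using S unfolding least_def by blast
  have "S \<sqsubseteq>\<^bsub>?L\<^esub> iso_class wu1" "S \<sqsubseteq>\<^bsub>?L\<^esub> iso_class wu2"
    using bspec[OF all u1] bspec[OF all u2] by auto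
  then have "rot_le S (iso_class wu1)" "rot_le S (iso_class wu2)" by (simp_all only: le3)
  then have "reaches s wu1" "reaches s wu2" using s(2) by (simp_all only: rot_le_iff)
  then have "s \<in> set Y1" "s \<in> set Y2"
    using bclosed_reach[OF cl_Y1 mem(3)] bclosed_reach[OF cl_Y2 mem(4)] by auto
  moreover have "\<not> (s \<in> set Xb \<and> s \<in> set Y1 \<and> s \<in> set Y2)"
    using disj sX(1) unfolding list_all_iff by (rule bspec)
  ultimately show False using sX(2) by blast
qed

theorem mainTheorem4:
  shows "\<exists>n\<ge>1. partial_order (rotation_order n) \<and> \<not> lattice (rotation_order n)"
  using po3 not_lattice3 by (intro exI[of _ 3]) simp

end
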